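(* Let $X$ be a real $n\times p$ matrix ($p<n$) of full column rank and $\sigma>0$. The regression breakdown point of the $\ell_1\square\ell_2$ estimator is at least $m(X)$; that is, for every $f\in\mathbb{R}^p$, $z\in\mathbb{R}^n$ and every $M\subset\{1,\dots,n\}$ with $|M|\leq m(X)$, the set of all first components $\hat g$ of minimizers of $(g,b)\mapsto\sigma\|y-Xg-b\|_1+\frac12\|b\|_2^2$ with $y=Xf+z+e$, where $e$ ranges over all vectors in $\mathbb{R}^n$ with $\operatorname{supp}(e)\subset M$, is bounded.
   Context: For data $y\in\mathbb{R}^n$, the $\ell_1\square\ell_2$ estimator is the first component $\hat g$ of a solution $(\hat g,\hat b)$ of $\min_{(g,b)\in\mathbb{R}^p\times\mathbb{R}^n}\sigma\|y-Xg-b\|_1+\frac12\|b\|_2^2$. The regression breakdown point of an estimator is the maximum number of components of the data $y$ that may diverge while keeping the estimator bounded. With $N=\{1,\dots,n\}$ and $x_i^\top$ the rows of $X$, $c_k(X)=\min_{S\subset N,|S|=k}\min_{g\neq0}\frac{\sum_{i\in N\setminus S}|x_i^\top g|}{\sum_{i\in N}|x_i^\top g|}$ for $k\in N$, and $m(X)=\max\{k\in N: c_k(X)>1/2\}$. *)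

theory Defs
  imports "HOL-Analysis.Analysis"
begin

definition l1l2_obj :: "real \<Rightarrow> real^'p^'n \<Rightarrow> real^'n \<Rightarrow> real^'p \<Rightarrow> real^'n \<Rightarrow> real" where
  "l1l2_obj \<sigma> X y g b =
     \<sigma> * (\<Sum>i\<in>UNIV. \<bar>(y - X *v g - b) $ i\<bar>) + (1/2) * (norm b)\<^sup>2"

definition l1l2_minimizer :: "real \<Rightarrow> real^'p^'n \<Rightarrow> real^'n \<Rightarrow> real^'p \<Rightarrow> real^'n \<Rightarrow> bool" where
  "l1l2_minimizer \<sigma> X y g b \<longleftrightarrow> (\<forall>g' b'. l1l2_obj \<sigma> X y g b \<le> l1l2_obj \<sigma> X y g' b')"

text \<open>c_k(X): minimum over |S| = k and g \<noteq> 0 of the ratio (rendered as Inf;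
  the set is nonempty and bounded for 1 \<le> k \<le> n).\<close>
definition c_k :: "nat \<Rightarrow> real^'p^'n \<Rightarrow> real" where
  "c_k k X = Inf {(\<Sum>i\<in>UNIV - S. \<bar>(X *v g) $ i\<bar>) / (\<Sum>i\<in>UNIV. \<bar>(X *v g) $ i\<bar>)
                  | S g. card S = k \<and> g \<noteq> 0}"

definition m_X :: "real^'p^'n \<Rightarrow> nat" where
  "m_X X = Max ({0} \<union> {k \<in> {1..CARD('n)}. c_k k X > 1/2})"

end

theory Submission
  imports Defs
begin

lemma obj_lower:
  fixes X :: "real^'p^'n"
  assumes "\<sigma> > 0"
  shows "\<sigma> * (\<Sum>i\<in>UNIV. \<bar>(y - X *v g) $ i\<bar>) - real CARD('n) * \<sigma>\<^sup>2 / 2 \<le> l1l2_obj \<sigma> X y g b"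
proof -
  have nb: "(norm b)\<^sup>2 = (\<Sum>i\<in>UNIV. (b$i)\<^sup>2)"
    proof -
    have "(norm b)\<^sup>2 = inner b b" by (simp add: dot_square_norm)
    also have "\<dots> = (\<Sum>i\<in>UNIV. inner (b$i) (b$i))" by (simp add: inner_vec_def)
    finally show ?thesis by (simp add: power2_eq_square)
  qed
  have c: "\<sigma> * \<bar>(y - X *v g) $ i\<bar> - \<sigma>\<^sup>2 / 2 \<le> \<sigma> * \<bar>(y - X *v g - b) $ i\<bar> + (1/2) * (b$i)\<^sup>2" for i
  proof -
    have "\<bar>(y - X *v g) $ i\<bar> \<le> \<bar>(y - X *v g - b) $ i\<bar> + \<bar>b$i\<bar>" by simp
    hence "\<sigma> * \<bar>(y - X *v g) $ i\<bar> \<le> \<sigma> * \<bar>(y - X *v g - b) $ i\<bar> + \<sigma> * \<bar>b$i\<bar>"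
      using assms by (metis distrib_left mult_left_mono less_le)
    moreover have "\<sigma> * \<bar>b$i\<bar> \<le> \<sigma>\<^sup>2/2 + (1/2) * (b$i)\<^sup>2"
    proof -
      have "0 \<le> (\<sigma> - \<bar>b$i\<bar>)\<^sup>2" by simp
      also have "\<dots> = \<sigma>\<^sup>2 - 2 * (\<sigma> * \<bar>b$i\<bar>) + (b$i)\<^sup>2"
        by (simp add: power2_diff)
      finally show ?thesis by linarith
    qed
    ultimately show ?thesis by linarith
  qed
  have "(\<Sum>i\<in>UNIV. \<sigma> * \<bar>(y - X *v g) $ i\<bar> - \<sigma>\<^sup>2 / 2) \<le> (\<Sum>i\<in>UNIV. \<sigma> * \<bar>(y - X *v g - b) $ i\<bar> + (1/2) * (b$i)\<^sup>2)"
    by (rule sum_mono, rule c)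
  thus ?thesis
    by (simp add: l1l2_obj_def nb sum_subtractf sum.distrib sum_distrib_left)
qed

lemma split_ineq:
  fixes z e w :: "real^'n"
  assumes "\<forall>i. i \<notin> M \<longrightarrow> e $ i = 0"
  shows "(\<Sum>i\<in>UNIV - M. \<bar>w$i\<bar>) - (\<Sum>i\<in>M. \<bar>w$i\<bar>) - 2 * (\<Sum>i\<in>UNIV. \<bar>z$i\<bar>)
     \<le> (\<Sum>i\<in>UNIV. \<bar>(z + e - w)$i\<bar>) - (\<Sum>i\<in>UNIV. \<bar>(z + e)$i\<bar>)"
proof -
  have "(\<Sum>i\<in>UNIV. (if i \<in> M then - \<bar>w$i\<bar> else \<bar>w$i\<bar>) - 2 * \<bar>z$i\<bar>)
     \<le> (\<Sum>i\<in>UNIV. \<bar>(z + e - w)$i\<bar> - \<bar>(z + e)$i\<bar>)"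
  proof (rule sum_mono)
    fix i
    show "(if i \<in> M then - \<bar>w$i\<bar> else \<bar>w$i\<bar>) - 2 * \<bar>z$i\<bar> \<le> \<bar>(z + e - w)$i\<bar> - \<bar>(z + e)$i\<bar>"
      using assms[rule_format, of i] by (cases "i \<in> M") auto
  qed
  moreover have "(\<Sum>i\<in>UNIV. (if i \<in> M then - \<bar>w$i\<bar> else \<bar>w$i\<bar>))
      = (\<Sum>i\<in>UNIV - M. \<bar>w$i\<bar>) - (\<Sum>i\<in>M. \<bar>w$i\<bar>)"
    by (simp add: sum.If_cases sum_negf Compl_eq_Diff_UNIV Int_commute)
  ultimately show ?thesis
    by (simp add: sum_subtractf sum_distrib_left)
qed

lemma cinf_bound:
  fixes X :: "real^'p^'n"
  assumes "c_k k X > 1/2" "card S = k"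
  shows "c_k k X * (\<Sum>i\<in>UNIV. \<bar>(X *v u) $ i\<bar>) \<le> (\<Sum>i\<in>UNIV - S. \<bar>(X *v u) $ i\<bar>)"
proof (cases "(\<Sum>i\<in>UNIV. \<bar>(X *v u) $ i\<bar>) = 0")
  case True
  then show ?thesis by (simp add: sum_nonneg)
next
  case False
  hence pos: "(\<Sum>i\<in>UNIV. \<bar>(X *v u) $ i\<bar>) > 0"
    by (simp add: order_less_le sum_nonneg)
  have "u \<noteq> 0" using False by auto
  hence "(\<Sum>i\<in>UNIV - S. \<bar>(X *v u) $ i\<bar>) / (\<Sum>i\<in>UNIV. \<bar>(X *v u) $ i\<bar>) \<in>
     {(\<Sum>i\<in>UNIV - S. \<bar>(X *v g) $ i\<bar>) / (\<Sum>i\<in>UNIV. \<bar>(X *v g) $ i\<bar>)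
                  | S g. card S = k \<and> g \<noteq> 0}" using assms(2) by blast
  moreover have "bdd_below {(\<Sum>i\<in>UNIV - S. \<bar>(X *v g) $ i\<bar>) / (\<Sum>i\<in>UNIV. \<bar>(X *v g) $ i\<bar>)
                  | S g. card S = k \<and> g \<noteq> 0}"
    by (rule bdd_belowI[of _ 0]) (auto intro!: divide_nonneg_nonneg sum_nonneg)
  ultimately have "c_k k X \<le> (\<Sum>i\<in>UNIV - S. \<bar>(X *v u) $ i\<bar>) / (\<Sum>i\<in>UNIV. \<bar>(X *v u) $ i\<bar>)"
    unfolding c_k_def by (rule cInf_lower)
  thus ?thesis using pos by (simp add: le_divide_eq)
qed

theorem corollary4p6:
  fixes X :: "real^'p^'n" and \<sigma> :: real and f :: "real^'p" and z :: "real^'n"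
    and M :: "'n set"
  assumes "CARD('p) < CARD('n)"
    and "rank X = CARD('p)"
    and "\<sigma> > 0"
    and "card M \<le> m_X X"
  shows "bounded {g. \<exists>e b. (\<forall>i. i \<notin> M \<longrightarrow> e $ i = 0) \<and>
                         l1l2_minimizer \<sigma> X (X *v f + z + e) g b}"
proof -
  define s where "s = (\<lambda>v::real^'n. \<Sum>i\<in>UNIV. \<bar>v $ i\<bar>)"
  obtain c where c: "c > 1/2" and cM: "\<And>u. c * s (X *v u) \<le> (\<Sum>i\<in>UNIV - M. \<bar>(X *v u) $ i\<bar>)"
  proof (cases "m_X X = 0")
    case True
    hence "M = {}" using assms(4) by simp
    show ?thesis by (rule that[of 1]) (auto simp: s_def \<open>M = {}\<close>)
  next
    case False
    let ?A = "{0} \<union> {k \<in> {1..CARD('n)}. c_k k X > 1/2}"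
    have "m_X X \<in> ?A" unfolding m_X_def by (rule Max_in) auto
    with False have mA: "m_X X \<le> CARD('n)" "c_k (m_X X) X > 1/2" by auto
    obtain S where S: "M \<subseteq> S" "card S = m_X X"
      using exists_subset_between[of M "m_X X" UNIV] assms(4) mA(1) by auto
    show ?thesis
    proof (rule that[OF mA(2)])
      fix u
      have "c_k (m_X X) X * s (X *v u) \<le> (\<Sum>i\<in>UNIV - S. \<bar>(X *v u) $ i\<bar>)"
        unfolding s_def by (rule cinf_bound[OF mA(2) S(2)])
      also have "\<dots> \<le> (\<Sum>i\<in>UNIV - M. \<bar>(X *v u) $ i\<bar>)"
        by (rule sum_mono2) (use S(1) in auto)
      finally show "c_k (m_X X) X * s (X *v u) \<le> (\<Sum>i\<in>UNIV - M. \<bar>(X *v u) $ i\<bar>)" .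
    qed
  qed
  define K where "K = (real CARD('n) * \<sigma> / 2 + 2 * s z) / (2 * c - 1)"
  obtain B where B: "B > 0" "\<And>x. B * norm x \<le> norm (X *v x)"
    using linear_inj_bounded_below_pos[of "(*v) X"] assms(2) full_rank_injective by blast
  have key: "s (X *v (g - f)) \<le> K" if "\<forall>i. i \<notin> M \<longrightarrow> e $ i = 0"
      "l1l2_minimizer \<sigma> X (X *v f + z + e) g b" for g e b
  proof -
    let ?y = "X *v f + z + e"
    define u where "u = g - f"
    have "l1l2_obj \<sigma> X ?y g b \<le> l1l2_obj \<sigma> X ?y f 0"
      using that(2) unfolding l1l2_minimizer_def by blast
    also have "\<dots> = \<sigma> * s (z + e)" by (simp add: l1l2_obj_def s_def)
    finally have "\<sigma> * s (?y - X *v g) - real CARD('n) * \<sigma>\<^sup>2 / 2 \<le> \<sigma> * s (z + e)"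
      using obj_lower[OF assms(3), of ?y X g b] unfolding s_def by linarith
    hence "\<sigma> * (s (?y - X *v g) - s (z + e)) \<le> \<sigma> * (real CARD('n) * \<sigma> / 2)"
      by (simp add: algebra_simps power2_eq_square)
    hence d: "s (?y - X *v g) - s (z + e) \<le> real CARD('n) * \<sigma> / 2"
      using assms(3) by (simp add: mult_le_cancel_left_pos)
    have "?y - X *v g = z + e - X *v u"
      by (simp add: u_def matrix_vector_mult_diff_distrib)
    with d have d2: "s (z + e - X *v u) - s (z + e) \<le> real CARD('n) * \<sigma> / 2" by simp
    have sp: "(\<Sum>i\<in>UNIV - M. \<bar>(X *v u)$i\<bar>) - (\<Sum>i\<in>M. \<bar>(X *v u)$i\<bar>) - 2 * s z
       \<le> s (z + e - X *v u) - s (z + e)"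
      unfolding s_def by (rule split_ineq[OF that(1)])
    have tot: "s (X *v u) = (\<Sum>i\<in>UNIV - M. \<bar>(X *v u)$i\<bar>) + (\<Sum>i\<in>M. \<bar>(X *v u)$i\<bar>)"
      unfolding s_def by (metis add.commute finite subset_UNIV sum.subset_diff)
    have "(2 * c - 1) * s (X *v u) \<le> real CARD('n) * \<sigma> / 2 + 2 * s z"
      using cM[of u] sp d2 tot by (simp add: algebra_simps)
    thus ?thesis using c unfolding K_def u_def by (simp add: le_divide_eq mult.commute)
  qed
  show ?thesis
    unfolding bounded_iff
  proof (intro exI ballI)
    fix g assume "g \<in> {g. \<exists>e b. (\<forall>i. i \<notin> M \<longrightarrow> e $ i = 0) \<and>
                         l1l2_minimizer \<sigma> X (X *v f + z + e) g b}"
    then obtain e b where "\<forall>i. i \<notin> M \<longrightarrow> e $ i = 0" "l1l2_minimizer \<sigma> X (X *v f + z + e) g b"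
      by blast
    from key[OF this] have "s (X *v (g - f)) \<le> K" .
    moreover have "B * norm (g - f) \<le> s (X *v (g - f))"
      using B(2)[of "g - f"] norm_le_l1_cart[of "X *v (g - f)"] unfolding s_def by linarith
    ultimately have "norm (g - f) \<le> K / B" using B(1) by (simp add: le_divide_eq mult.commute)
    hence "norm g \<le> norm f + K / B" using norm_triangle_sub[of g f] by linarith
    thus "norm g \<le> norm f + K / B" .
  qed
qed

end
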